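(* Let $\alpha$ be irrational with $\ln2/\ln3<\alpha<1$ and write $1c_\alpha=s_0s_1s_2\cdots$. Then $$\limsup_{k\to\infty}\Phi_{\mathbb{R}}(s_ks_{k+1}\cdots)=\Phi_{\mathbb{R}}(1c_\alpha),\qquad \liminf_{k\to\infty}\Phi_{\mathbb{R}}(s_ks_{k+1}\cdots)=\Phi_{\mathbb{R}}(0c_\alpha)=3\Phi_{\mathbb{R}}(1c_\alpha)+1.$$
   Context: For $0<\alpha<1$, $1c_\alpha=(\lceil(j+1)\alpha\rceil-\lceil j\alpha\rceil)_{j\ge0}$ and $0c_\alpha=(\lfloor(j+1)\alpha\rfloor-\lfloor j\alpha\rfloor)_{j\ge0}$. For an infinite $0$-$1$ word $w$ with $1$'s at positions $d_0<d_1<\cdots$, $\Phi_{\mathbb{R}}(w)=-\sum_{i\ge0}2^{d_i}/3^{i+1}$ (a convergent real series in the situation considered). *)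

theory Defs
  imports "HOL-Analysis.Analysis" "HOL-Library.Infinite_Set" "HOL-Library.Liminf_Limsup"
begin

text \<open>Upper and lower characteristic (mechanical) words; 0-1 words are nat \<Rightarrow> int.\<close>
definition cword1 :: "real \<Rightarrow> nat \<Rightarrow> int" where
  "cword1 \<alpha> j = \<lceil>(real j + 1) * \<alpha>\<rceil> - \<lceil>real j * \<alpha>\<rceil>"

definition cword0 :: "real \<Rightarrow> nat \<Rightarrow> int" where
  "cword0 \<alpha> j = \<lfloor>(real j + 1) * \<alpha>\<rfloor> - \<lfloor>real j * \<alpha>\<rfloor>"

definition PhiR :: "(nat \<Rightarrow> int) \<Rightarrow> real" where
  "PhiR w = - (\<Sum>i. 2 ^ (enumerate {n. w n = 1} i) / 3 ^ (i + 1))"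

end

theory Submission
  imports Defs
begin

lemma enum_eq:
  fixes h :: "nat \<Rightarrow> nat"
  assumes "strict_mono h" "range h = S"
  shows "enumerate S n = h n"
proof -
  have inf: "infinite S" using assms
    by (metis finite_imageD strict_mono_imp_inj_on infinite_UNIV_nat)
  show ?thesis
  proof (induction n)
    case 0
    show ?case unfolding enumerate_0
      using assms by (intro Least_equality) (auto simp: strict_mono_less_eq)
  next
    case (Suc n)
    show ?case unfolding enumerate_Suc''[OF inf] Suc
    proof (intro Least_equality)
      show "h (Suc n) \<in> S \<and> h n < h (Suc n)" using assms by (auto simp: strict_mono_less)
      fix y assume "y \<in> S \<and> h n < y"
      then obtain m where "y = h m" "h n < h m" using assms by auto
      then show "h (Suc n) \<le> y" using assms by (auto simp: strict_mono_less_eq strict_mono_less)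
    qed
  qed
qed

definition GG :: "real \<Rightarrow> real \<Rightarrow> nat \<Rightarrow> nat" where
  "GG a c i = nat \<lfloor>(real i + c) / a\<rfloor>"

definition TT :: "real \<Rightarrow> real \<Rightarrow> real" where
  "TT a c = (\<Sum>i. 2 ^ GG a c i / 3 ^ (i+1))"

definition cc :: "real \<Rightarrow> nat \<Rightarrow> real" where
  "cc a k = real_of_int \<lceil>real k * a\<rceil> - real k * a"

lemma GG_strict_mono:
  assumes "0 < a" "a < 1" "0 \<le> c"
  shows "strict_mono (GG a c)"
proof (rule strict_mono_Suc_iff[THEN iffD2], intro allI)
  fix i
  have "(real i + c) / a + 1 \<le> (real (Suc i) + c) / a"
    using assms by (simp add: field_simps)
  hence "\<lfloor>(real i + c) / a\<rfloor> < \<lfloor>(real (Suc i) + c) / a\<rfloor>" by linarith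
  moreover have "0 \<le> \<lfloor>(real i + c) / a\<rfloor>" using assms by simp
  ultimately show "GG a c i < GG a c (Suc i)" unfolding GG_def by (simp only: nat_less_eq_zless)
qed

lemma GG_mono:
  assumes "0 < a" "c \<le> d"
  shows "GG a c i \<le> GG a d i"
  unfolding GG_def using assms
  by (intro nat_mono floor_mono divide_right_mono) auto

lemma cc_ge0: "0 \<le> cc a k"
  unfolding cc_def by linarith

lemma cc_lt1: "cc a k < 1"
  unfolding cc_def by linarith

lemma ones_shift:
  assumes a: "0 < a" "a < 1"
  shows "{j. cword1 a (k+j) = 1} = range (GG a (cc a k))"
proof (intro equalityI subsetI)
  fix j assume "j \<in> {j. cword1 a (k+j) = 1}"
  hence eq: "\<lceil>(real (k+j) + 1) * a\<rceil> = \<lceil>real (k+j) * a\<rceil> + 1" unfolding cword1_def by simp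
  define M where "M = \<lceil>real (k+j) * a\<rceil>"
  define K where "K = \<lceil>real k * a\<rceil>"
  have h1: "real (k+j) * a \<le> M" unfolding M_def by simp
  have h2: "M < (real (k+j) + 1) * a"
  proof (rule ccontr)
    assume "\<not> M < (real (k+j) + 1) * a"
    hence "\<lceil>(real (k+j) + 1) * a\<rceil> \<le> M" by (simp add: ceiling_le_iff)
    with eq show False unfolding M_def by simp
  qed
  have KM: "K \<le> M" unfolding K_def M_def using a by (intro ceiling_mono) simp
  define i where "i = nat (M - K)"
  have ri: "real i = M - K" unfolding i_def using KM by simp
  have x: "(real i + cc a k) / a = M / a - real k"
    unfolding ri cc_def K_def[symmetric] using a by (simp add: field_simps)
  have lo: "real j \<le> M / a - real k" using h1 a by (simp add: field_simps)
  have hi: "M / a - real k < real j + 1" using h2 a by (simp add: field_simps)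
  have "\<lfloor>(real i + cc a k) / a\<rfloor> = int j" unfolding x using lo hi
    by (subst floor_eq_iff) simp
  hence "GG a (cc a k) i = j" unfolding GG_def by simp
  thus "j \<in> range (GG a (cc a k))" by (metis rangeI)
next
  fix j assume "j \<in> range (GG a (cc a k))"
  then obtain i where ji: "j = GG a (cc a k) i" by auto
  define K where "K = \<lceil>real k * a\<rceil>"
  define M where "M = int i + K"
  define x where "x = (real i + cc a k) / a"
  have x0: "0 \<le> x" unfolding x_def using a cc_ge0[of a k] by simp
  have xe: "x = M / a - real k"
    unfolding x_def M_def cc_def K_def[symmetric] using a by (simp add: field_simps)
  have rj: "real j = \<lfloor>x\<rfloor>" unfolding ji GG_def x_def[symmetric] using x0 by simp
  have lo: "real j \<le> x" using rj by linarith
  have hi: "x < real j + 1" using rj by linarith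
  have l1: "real (k+j) * a \<le> M" using lo a unfolding xe by (simp add: field_simps)
  have l2: "M < (real (k+j) + 1) * a" using hi a unfolding xe by (simp add: field_simps)
  have c1: "\<lceil>real (k+j) * a\<rceil> = M"
    using l1 l2 a by (intro ceiling_unique) (auto simp: algebra_simps)
  have c2: "\<lceil>(real (k+j) + 1) * a\<rceil> = M + 1"
    using l1 l2 a by (intro ceiling_unique) (auto simp: algebra_simps)
  show "j \<in> {j. cword1 a (k+j) = 1}" unfolding cword1_def using c1 c2 by simp
qed

lemma irr_div:
  assumes "a \<notin> \<rat>" "0 < a" "M \<noteq> 0"
  shows "real_of_int M / a \<noteq> real n"
proof
  assume h: "real_of_int M / a = real n"
  have "n \<noteq> 0"
  proof
    assume "n = 0"
    with h have "real_of_int M / a = 0" by simp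
    thus False using assms by simp
  qed
  hence "a = real_of_int M / real n" using h assms by (simp add: field_simps)
  hence "a \<in> \<rat>" by simp
  thus False using assms by simp
qed

lemma ones0:
  assumes irr: "a \<notin> \<rat>" and a: "0 < a" "a < 1"
  shows "{j. cword0 a j = 1} = range (GG a 1)"
proof (intro equalityI subsetI)
  fix j assume "j \<in> {j. cword0 a j = 1}"
  hence eq: "\<lfloor>(real j + 1) * a\<rfloor> = \<lfloor>real j * a\<rfloor> + 1" unfolding cword0_def by simp
  define M where "M = \<lfloor>(real j + 1) * a\<rfloor>"
  have h1: "M \<le> (real j + 1) * a" unfolding M_def by simp
  have h2: "real j * a < M"
  proof (rule ccontr)
    assume "\<not> real j * a < M"
    hence "M \<le> \<lfloor>real j * a\<rfloor>" by (simp add: le_floor_iff)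
    with eq show False unfolding M_def by simp
  qed
  have M1: "1 \<le> M" using h2 a by (smt (verit) of_int_le_0_iff mult_nonneg_nonneg of_nat_0_le_iff)
  define i where "i = nat (M - 1)"
  have ri: "real i + 1 = M" unfolding i_def using M1 by simp
  have ne: "real_of_int M / a \<noteq> real (j+1)" using irr a M1 by (intro irr_div) auto
  have lo: "real j \<le> M / a" using h2 a by (simp add: field_simps)
  have hi0: "M / a \<le> real j + 1" using h1 a by (simp add: field_simps)
  have hi: "M / a < real j + 1" using hi0 ne by simp
  have "\<lfloor>(real i + 1) / a\<rfloor> = int j" unfolding ri using lo hi
    by (subst floor_eq_iff) simp
  hence "GG a 1 i = j" unfolding GG_def by simp
  thus "j \<in> range (GG a 1)" by (metis rangeI)
next
  fix j assume "j \<in> range (GG a 1)"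
  then obtain i where ji: "j = GG a 1 i" by auto
  define M where "M = int i + 1"
  define x where "x = (real i + 1) / a"
  have x0: "0 \<le> x" unfolding x_def using a by simp
  have xe: "x = M / a" unfolding x_def M_def by simp
  have rj: "real j = \<lfloor>x\<rfloor>" unfolding ji GG_def x_def[symmetric] using x0 by simp
  have ne: "real_of_int M / a \<noteq> real j" using irr a by (intro irr_div) (auto simp: M_def)
  have lo: "real j < x" using rj ne xe by linarith
  have hi: "x < real j + 1" using rj by linarith
  have l1: "real j * a < M" using lo a unfolding xe by (simp add: field_simps)
  have l2: "M < (real j + 1) * a" using hi a unfolding xe by (simp add: field_simps)
  have c1: "\<lfloor>real j * a\<rfloor> = M - 1"
    using l1 l2 a by (intro floor_unique) (auto simp: algebra_simps)
  have c2: "\<lfloor>(real j + 1) * a\<rfloor> = M"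
    using l1 l2 a by (intro floor_unique) (auto simp: algebra_simps)
  show "j \<in> {j. cword0 a j = 1}" unfolding cword0_def using c1 c2 by simp
qed

lemma Phi_shift:
  assumes a: "0 < a" "a < 1"
  shows "PhiR (\<lambda>j. cword1 a (k+j)) = - TT a (cc a k)"
proof -
  have "enumerate {n. cword1 a (k+n) = 1} = GG a (cc a k)"
    using enum_eq[OF GG_strict_mono[OF a cc_ge0] ones_shift[OF a, symmetric]] by auto
  thus ?thesis unfolding PhiR_def TT_def by simp
qed

lemma Phi_c1:
  assumes a: "0 < a" "a < 1"
  shows "PhiR (cword1 a) = - TT a 0"
  using Phi_shift[OF a, of 0] by (simp add: cc_def)

lemma Phi_c0:
  assumes irr: "a \<notin> \<rat>" and a: "0 < a" "a < 1"
  shows "PhiR (cword0 a) = - TT a 1"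
proof -
  have "enumerate {n. cword0 a n = 1} = GG a 1"
    using enum_eq[OF GG_strict_mono[OF a] ones0[OF irr a, symmetric]] by auto
  thus ?thesis unfolding PhiR_def TT_def by simp
qed

lemma term_bound:
  assumes a: "0 < a" and c: "0 \<le> c" "c \<le> 1"
  shows "2 ^ GG a c i / 3 ^ (i+1) \<le> (2 powr (1/a) / 3) ^ (i+1)"
proof -
  have "real (GG a c i) \<le> (real i + c) / a" unfolding GG_def using a c by simp
  also have "\<dots> \<le> (1/a) * real (i+1)" using a c by (simp add: field_simps)
  finally have le: "real (GG a c i) \<le> (1/a) * real (i+1)" .
  have "(2::real) ^ GG a c i = 2 powr real (GG a c i)" by (simp add: powr_realpow)
  also have "\<dots> \<le> 2 powr ((1/a) * real (i+1))" using le by (intro powr_mono) auto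
  also have "\<dots> = (2 powr (1/a)) powr real (i+1)" by (simp add: powr_powr)
  also have "\<dots> = (2 powr (1/a)) ^ (i+1)" by (rule powr_realpow) simp
  finally have "(2::real) ^ GG a c i \<le> (2 powr (1/a)) ^ (i+1)" .
  thus ?thesis by (simp add: power_divide divide_right_mono)
qed

lemma r_lt1:
  fixes a :: real
  assumes "ln 2 / ln 3 < a" "0 < a"
  shows "2 powr (1/a) < (3::real)"
proof -
  have "ln 2 < a * ln 3" using assms by (simp add: field_simps)
  hence "ln 2 / a < ln 3" using assms by (simp add: field_simps)
  have "2 powr (1/a) = exp (ln 2 / a)" by (simp add: powr_def)
  also have "\<dots> < exp (ln 3)" using \<open>ln 2 / a < ln 3\<close> by (simp only: exp_less_cancel_iff)
  also have "\<dots> = 3" by simp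
  finally show ?thesis .
qed

lemma summable_r:
  fixes a :: real
  assumes "ln 2 / ln 3 < a" "0 < a"
  shows "summable (\<lambda>i. (2 powr (1/a) / 3) ^ (i+1))"
proof -
  have r: "norm (2 powr (1/a) / 3) < (1::real)" using r_lt1[OF assms] by simp
  show ?thesis using summable_mult[OF summable_geometric[OF r], of "2 powr (1/a) / 3"]
    by (simp add: mult.commute)
qed

lemma summable_T:
  fixes a :: real
  assumes "ln 2 / ln 3 < a" "0 < a" "0 \<le> c" "c \<le> 1"
  shows "summable (\<lambda>i. 2 ^ GG a c i / 3 ^ (i+1) :: real)"
  by (rule summable_comparison_test'[OF summable_r[OF assms(1,2)], of 0])
     (use term_bound[OF assms(2-4)] in simp)

lemma TT_mono:
  fixes a :: real
  assumes "ln 2 / ln 3 < a" "0 < a" "0 \<le> c" "c \<le> d" "d \<le> 1"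
  shows "TT a c \<le> TT a d"
  unfolding TT_def
proof (rule suminf_le)
  fix i show "2 ^ GG a c i / 3 ^ (i+1) \<le> (2 ^ GG a d i / 3 ^ (i+1) :: real)"
    using GG_mono[OF assms(2,4)] by (intro divide_right_mono power_increasing) auto
qed (use summable_T assms in auto)

lemma TT_tendsto:
  fixes a :: real
  assumes a: "ln 2 / ln 3 < a" "0 < a" and F: "F \<noteq> bot"
    and ev: "\<And>i. eventually (\<lambda>c. GG a c i = GG a c0 i) F"
    and evc: "eventually (\<lambda>c. 0 \<le> c \<and> c \<le> 1) F"
  shows "(TT a \<longlongrightarrow> TT a c0) F"
proof -
  have lim: "\<And>k. ((\<lambda>c. 2 ^ GG a c k / 3 ^ (k+1) :: real) \<longlongrightarrow> 2 ^ GG a c0 k / 3 ^ (k+1)) F"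
    by (rule tendsto_eventually) (rule eventually_mono[OF ev], simp)
  have bnd: "eventually (\<lambda>(k,c). norm (2 ^ GG a c k / 3 ^ (k+1) :: real) \<le> (2 powr (1/a) / 3) ^ (k+1))
      (at_top \<times>\<^sub>F F)"
    using eventually_prodI[OF always_eventually[of "\<lambda>_::nat. True"] evc]
    by (rule eventually_mono) (use term_bound[OF a(2)] in auto)
  from tannerys_theorem[OF lim bnd summable_r[OF a] F] show ?thesis
    unfolding TT_def by simp
qed

lemma TT_right0:
  fixes a :: real
  assumes a: "ln 2 / ln 3 < a" "0 < a"
  shows "(TT a \<longlongrightarrow> TT a 0) (at_right 0)"
proof (rule TT_tendsto[OF a])
  fix i
  show "eventually (\<lambda>c. GG a c i = GG a 0 i) (at_right 0)"
    unfolding eventually_at_right_field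
  proof (intro exI[of _ "a * (of_int \<lfloor>real i / a\<rfloor> + 1) - real i"] conjI allI impI)
    have "real i / a < of_int \<lfloor>real i / a\<rfloor> + 1" by linarith
    thus "0 < a * (of_int \<lfloor>real i / a\<rfloor> + 1) - real i" using a by (simp add: field_simps)
    fix y :: real assume y: "0 < y" "y < a * (of_int \<lfloor>real i / a\<rfloor> + 1) - real i"
    have "(real i + y) / a < of_int \<lfloor>real i / a\<rfloor> + 1" using y a by (simp add: field_simps)
    moreover have "real i / a \<le> (real i + y) / a" using y a by (simp add: field_simps)
    moreover have "of_int \<lfloor>real i / a\<rfloor> \<le> real i / a" by linarith
    ultimately have "\<lfloor>(real i + y) / a\<rfloor> = \<lfloor>real i / a\<rfloor>"
      by (subst floor_eq_iff) linarith
    thus "GG a y i = GG a 0 i" unfolding GG_def by simp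
  qed
next
  show "eventually (\<lambda>c. 0 \<le> c \<and> c \<le> 1) (at_right (0::real))"
    unfolding eventually_at_right_field by (intro exI[of _ 1]) auto
qed simp

lemma TT_left1:
  fixes a :: real
  assumes irr: "a \<notin> \<rat>" and a: "ln 2 / ln 3 < a" "0 < a"
  shows "(TT a \<longlongrightarrow> TT a 1) (at_left 1)"
proof (rule TT_tendsto[OF a])
  fix i
  define f where "f = \<lfloor>(real i + 1) / a\<rfloor>"
  have f0: "0 \<le> f" unfolding f_def using a by simp
  have "real_of_int (int i + 1) / a \<noteq> real (nat f)" using irr a by (intro irr_div) auto
  hence ne: "(real i + 1) / a \<noteq> of_int f" using f0 by simp
  have fl: "of_int f < (real i + 1) / a" using ne unfolding f_def by (meson floor_less_iff linorder_neqE_linordered_idom not_less of_int_floor_le)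
  show "eventually (\<lambda>c. GG a c i = GG a 1 i) (at_left 1)"
    unfolding eventually_at_left_field
  proof (intro exI[of _ "1 - ((real i + 1) - a * of_int f)"] conjI allI impI)
    show "1 - ((real i + 1) - a * of_int f) < 1" using fl a by (simp add: field_simps)
    fix y :: real assume y: "1 - ((real i + 1) - a * of_int f) < y" "y < 1"
    have "(real i + y) / a < (real i + 1) / a" using y a by (simp add: field_simps)
    moreover have "of_int f < (real i + y) / a" using y a by (simp add: field_simps)
    moreover have "(real i + 1) / a < of_int f + 1" unfolding f_def by linarith
    ultimately have "\<lfloor>(real i + y) / a\<rfloor> = f"
      by (subst floor_eq_iff) linarith
    thus "GG a y i = GG a 1 i" unfolding GG_def f_def by simp
  qed
next
  show "eventually (\<lambda>c. 0 \<le> c \<and> c \<le> 1) (at_left (1::real))"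
    unfolding eventually_at_left_field by (intro exI[of _ 0]) auto
qed simp

lemma frac_pos:
  assumes irr: "a \<notin> \<rat>" and a: "0 < a" and k: "0 < k"
  shows "0 < frac (real k * a)"
proof -
  have "real k * a \<notin> \<int>"
  proof
    assume "real k * a \<in> \<int>"
    then obtain m where m: "real k * a = of_int m" by (auto elim: Ints_cases)
    have "m \<noteq> 0" using m a k by (metis mult_pos_pos of_int_0 of_nat_0_less_iff less_irrefl)
    from irr_div[OF irr a this, of k] m a show False by (simp add: field_simps)
  qed
  thus ?thesis using frac_ge_0[of "real k * a"] frac_eq_0_iff[of "real k * a"] by linarith
qed

lemma cc_frac:
  assumes irr: "a \<notin> \<rat>" and a: "0 < a" and k: "0 < k"
  shows "cc a k = 1 - frac (real k * a)"
proof -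
  have "0 < frac (real k * a)" by (rule frac_pos[OF irr a k])
  hence "\<lceil>real k * a\<rceil> = \<lfloor>real k * a\<rfloor> + 1"
    by (intro ceiling_unique) (auto simp: frac_def)
  thus ?thesis unfolding cc_def frac_def by simp
qed

lemma dens_small:
  assumes irr: "a \<notin> \<rat>" and a: "0 < a" and d: "0 < \<delta>"
  shows "\<exists>k\<ge>n. 0 < cc a k \<and> cc a k < \<delta>"
proof -
  define A where "A = insert 1 ((\<lambda>k'. 1 - frac (real k' * a)) ` {1..<n})"
  define \<eta> where "\<eta> = min \<delta> (Min A)"
  have fA: "finite A" "A \<noteq> {}" unfolding A_def by auto
  have "\<forall>x\<in>A. 0 < x" unfolding A_def using frac_lt_1 by auto
  hence "0 < Min A" using fA by (simp add: Min_gr_iff)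
  hence eta: "0 < \<eta>" unfolding \<eta>_def using d by simp
  obtain k where k: "k > 0" "\<bar>frac (real k * a) - 1\<bar> < \<eta>"
    using Kronecker_approx_1_explicit[OF irr _ _ eta, of 1] by auto
  have ck: "cc a k = 1 - frac (real k * a)" by (rule cc_frac[OF irr a k(1)])
  have "n \<le> k"
  proof (rule ccontr)
    assume "\<not> n \<le> k"
    hence "1 - frac (real k * a) \<in> A" unfolding A_def using k by auto
    hence "Min A \<le> 1 - frac (real k * a)" using fA by simp
    thus False using k unfolding \<eta>_def by linarith
  qed
  moreover have "0 < cc a k" unfolding ck using frac_lt_1 by simp
  moreover have "cc a k < \<delta>" unfolding ck using k unfolding \<eta>_def by linarith
  ultimately show ?thesis by blast
qed

lemma dens_big:
  assumes irr: "a \<notin> \<rat>" and a: "0 < a" and d: "0 < \<delta>"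
  shows "\<exists>k\<ge>n. 1 - \<delta> < cc a k \<and> cc a k < 1"
proof -
  define A where "A = insert 1 ((\<lambda>k'. frac (real k' * a)) ` {1..<n})"
  define \<eta> where "\<eta> = min \<delta> (Min A)"
  have fA: "finite A" "A \<noteq> {}" unfolding A_def by auto
  have "\<forall>x\<in>A. 0 < x" unfolding A_def using frac_pos[OF irr a] by auto
  hence "0 < Min A" using fA by (simp add: Min_gr_iff)
  hence eta: "0 < \<eta>" unfolding \<eta>_def using d by simp
  obtain k where k: "k > 0" "\<bar>frac (real k * a) - 0\<bar> < \<eta>"
    using Kronecker_approx_1_explicit[OF irr _ _ eta, of 0] by auto
  have ck: "cc a k = 1 - frac (real k * a)" by (rule cc_frac[OF irr a k(1)])
  have "n \<le> k"
  proof (rule ccontr)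
    assume "\<not> n \<le> k"
    hence "frac (real k * a) \<in> A" unfolding A_def using k by auto
    hence "Min A \<le> frac (real k * a)" using fA by simp
    thus False using k unfolding \<eta>_def by linarith
  qed
  moreover have "cc a k < 1" by (rule cc_lt1)
  moreover have "1 - \<delta> < cc a k" unfolding ck using k unfolding \<eta>_def by linarith
  ultimately show ?thesis by blast
qed

theorem lemma37:
  fixes \<alpha> :: real
  assumes "\<alpha> \<notin> \<rat>" and "ln 2 / ln 3 < \<alpha>" and "\<alpha> < 1"
  shows "limsup (\<lambda>k. ereal (PhiR (\<lambda>j. cword1 \<alpha> (k + j)))) = ereal (PhiR (cword1 \<alpha>))
       \<and> liminf (\<lambda>k. ereal (PhiR (\<lambda>j. cword1 \<alpha> (k + j)))) = ereal (PhiR (cword0 \<alpha>))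
       \<and> PhiR (cword0 \<alpha>) = 3 * PhiR (cword1 \<alpha>) + 1"
proof -
  note irr = assms(1) and al = assms(2)
  have "0 < ln 2 / ln (3::real)" by simp
  hence a0: "0 < \<alpha>" using al by linarith
  have a: "0 < \<alpha>" "\<alpha> < 1" using a0 assms(3) by auto
  define A where "A = TT \<alpha> 0"
  define B where "B = TT \<alpha> 1"
  define g where "g = (\<lambda>k. ereal (- TT \<alpha> (cc \<alpha> k)))"
  have geq: "(\<lambda>k. ereal (PhiR (\<lambda>j. cword1 \<alpha> (k + j)))) = g"
    unfolding g_def using Phi_shift[OF a] by simp
  have lo: "A \<le> TT \<alpha> (cc \<alpha> k)" for k
    unfolding A_def using cc_ge0 cc_lt1 by (intro TT_mono[OF al a0]) (auto intro: less_imp_le)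
  have hi: "TT \<alpha> (cc \<alpha> k) \<le> B" for k
    unfolding B_def using cc_ge0 cc_lt1 by (intro TT_mono[OF al a0]) (auto intro: less_imp_le)
  have nearA: "\<exists>k\<ge>n. TT \<alpha> (cc \<alpha> k) < A + e" if e: "0 < e" for n e
  proof -
    have "eventually (\<lambda>c. dist (TT \<alpha> c) A < e) (at_right 0)"
      using tendstoD[OF TT_right0[OF al a0] e] unfolding A_def .
    then obtain b where b: "b > 0" "\<And>y. y > 0 \<Longrightarrow> y < b \<Longrightarrow> dist (TT \<alpha> y) A < e"
      unfolding eventually_at_right_field by auto
    obtain k where "k \<ge> n" "0 < cc \<alpha> k" "cc \<alpha> k < b" using dens_small[OF irr a0 b(1)] by blast
    thus ?thesis using b(2)[of "cc \<alpha> k"] by (auto simp: dist_real_def)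
  qed
  have nearB: "\<exists>k\<ge>n. B - e < TT \<alpha> (cc \<alpha> k)" if e: "0 < e" for n e
  proof -
    have "eventually (\<lambda>c. dist (TT \<alpha> c) B < e) (at_left 1)"
      using tendstoD[OF TT_left1[OF irr al a0] e] unfolding B_def .
    then obtain b where b: "b < 1" "\<And>y. y > b \<Longrightarrow> y < 1 \<Longrightarrow> dist (TT \<alpha> y) B < e"
      unfolding eventually_at_left_field by auto
    obtain k where "k \<ge> n" "1 - (1 - b) < cc \<alpha> k" "cc \<alpha> k < 1"
      using dens_big[of \<alpha> "1 - b" n] irr a0 b(1) by auto
    thus ?thesis using b(2)[of "cc \<alpha> k"] by (auto simp: dist_real_def)
  qed
  have supeq: "(SUP m\<in>{n..}. g m) = ereal (- A)" for n
  proof (rule antisym)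
    show "(SUP m\<in>{n..}. g m) \<le> ereal (- A)"
      by (rule SUP_least) (use lo in \<open>simp add: g_def\<close>)
    show "ereal (- A) \<le> (SUP m\<in>{n..}. g m)"
    proof (rule ereal_le_epsilon2)
      fix e :: real assume e: "0 < e"
      obtain k where k: "k \<ge> n" "TT \<alpha> (cc \<alpha> k) < A + e" using nearA[OF e] by blast
      have "ereal (- A) \<le> g k + ereal e" unfolding g_def using k by simp
      also have "\<dots> \<le> (SUP m\<in>{n..}. g m) + ereal e"
        using k by (intro add_right_mono SUP_upper) auto
      finally show "ereal (- A) \<le> (SUP m\<in>{n..}. g m) + ereal e" .
    qed
  qed
  have infeq: "(INF m\<in>{n..}. g m) = ereal (- B)" for n
  proof (rule antisym)
    show "ereal (- B) \<le> (INF m\<in>{n..}. g m)"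
      by (rule INF_greatest) (use hi in \<open>simp add: g_def\<close>)
    show "(INF m\<in>{n..}. g m) \<le> ereal (- B)"
    proof (rule ereal_le_epsilon2)
      fix e :: real assume e: "0 < e"
      obtain k where k: "k \<ge> n" "B - e < TT \<alpha> (cc \<alpha> k)" using nearB[OF e] by blast
      have "(INF m\<in>{n..}. g m) \<le> g k" using k by (intro INF_lower) auto
      also have "\<dots> \<le> ereal (- B) + ereal e" unfolding g_def using k by simp
      finally show "(INF m\<in>{n..}. g m) \<le> ereal (- B) + ereal e" .
    qed
  qed
  have L1: "limsup g = ereal (- A)" unfolding limsup_INF_SUP supeq by simp
  have L2: "liminf g = ereal (- B)" unfolding liminf_SUP_INF infeq by simp
  have P1: "PhiR (cword1 \<alpha>) = - A" unfolding A_def by (rule Phi_c1[OF a])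
  have P0: "PhiR (cword0 \<alpha>) = - B" unfolding B_def by (rule Phi_c0[OF irr a])
  have sA: "summable (\<lambda>i. 2 ^ GG \<alpha> 0 i / 3 ^ (i+1) :: real)" by (rule summable_T[OF al a0]) auto
  have sB: "summable (\<lambda>i. 2 ^ GG \<alpha> 1 i / 3 ^ (i+1) :: real)" by (rule summable_T[OF al a0]) auto
  have shift: "GG \<alpha> 0 (Suc i) = GG \<alpha> 1 i" for i unfolding GG_def by (simp add: add.commute)
  have h1: "(\<Sum>i. 2 ^ GG \<alpha> 0 (Suc i) / 3 ^ (Suc i+1) :: real) = A - 1/3"
    using suminf_split_head[OF sA] unfolding A_def TT_def by (simp add: GG_def)
  have "(\<Sum>i. 2 ^ GG \<alpha> 0 (Suc i) / 3 ^ (Suc i+1) :: real) = (\<Sum>i. (1/3) * (2 ^ GG \<alpha> 1 i / 3 ^ (i+1)))"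
    by (simp add: shift)
  also have "\<dots> = (1/3) * B" unfolding B_def TT_def by (rule suminf_mult[OF sB])
  finally have "B = 3 * A - 1" using h1 by simp
  hence L3: "PhiR (cword0 \<alpha>) = 3 * PhiR (cword1 \<alpha>) + 1" using P0 P1 by simp
  show ?thesis using L1 L2 L3 P0 P1 geq by simp
qed

end
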